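(* Let $T\ge 3$ be an integer. For each integer $N\ge 1$ define $$\psi_j=\psi_j(N,T)=\frac{\pi\bigl(2+T(2j-1)\bigr)}{2+(N-1)T},$$ and $$P_N=\frac{T}{2+(N-1)T}\prod_{j=1}^{\frac{N-2}{2}}\cot^2\frac{\psi_j}{2}\quad\text{if $N$ is even},\qquad P_N=\prod_{j=1}^{\frac{N-1}{2}}\cot^2\frac{\psi_j}{2}\quad\text{if $N$ is odd}$$ (an empty product equals $1$). Then $$\lim_{N\to\infty} P_N\, N^{2/T}=\pi^{\frac{2-T}{T}}\left(\Gamma\!\left(\frac{T+2}{2T}\right)\right)^2 .$$ In particular $P_N\asymp N^{-2/T}$ as $N\to\infty$.
   Context: $\Gamma$ denotes the Euler Gamma function. The limit is taken over all integers $N\to\infty$ (both parities), with $T$ fixed. *)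

theory Defs
  imports "HOL-Analysis.Analysis"
begin

definition psi :: "nat \<Rightarrow> nat \<Rightarrow> nat \<Rightarrow> real" where
  "psi N T j = pi * (2 + real T * (2 * real j - 1)) / (2 + (real N - 1) * real T)"

definition P :: "nat \<Rightarrow> nat \<Rightarrow> real" where
  "P T N = (if even N
     then real T / (2 + (real N - 1) * real T) *
          (\<Prod>j = 1..(N - 2) div 2. (cot (psi N T j / 2))^2)
     else (\<Prod>j = 1..(N - 1) div 2. (cot (psi N T j / 2))^2))"

end

theory Submission imports Defs "HOL-Real_Asymp.Real_Asymp" begin

definition gg :: "real \<Rightarrow> real" where "gg x = (if x = 0 then 0 else ln (sin x / x))"
definition gd :: "real \<Rightarrow> real" where "gd x = (if x = 0 then 0 else cos x / sin x - 1 / x)"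

lemma gg_deriv:
  assumes "0 < x" "x < pi"
  shows "(gg has_real_derivative gd x) (at x)"
proof -
  have sx: "sin x > 0" using assms by (simp add: sin_gt_zero)
  have "((\<lambda>x. ln (sin x / x)) has_real_derivative gd x) (at x)"
    using assms sx by (auto intro!: derivative_eq_intros simp: gd_def field_simps power2_eq_square)
  then show ?thesis
    by (rule has_field_derivative_transform_within_open[where S="{0<..<pi}"]) (use assms in \<open>auto simp: gg_def\<close>)
qed

lemma gg_isCont:
  assumes "0 < x" "x < pi"
  shows "isCont gg x"
  using gg_deriv[OF assms] by (rule DERIV_isCont)

lemma gd_isCont:
  assumes "0 < x" "x < pi"
  shows "isCont gd x"
proof -
  have sx: "sin x > 0" using assms by (simp add: sin_gt_zero)
  have c1: "isCont (\<lambda>x. cos x / sin x - 1 / x) x"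
    using assms sx by (auto intro!: continuous_intros)
  have c2: "\<forall>\<^sub>F y in nhds x. cos y / sin y - 1 / y = gd y"
    using eventually_nhds_in_open[of "{0<..<pi}" x] assms
    by (auto elim!: eventually_mono simp: gd_def)
  show ?thesis by (rule iffD1[OF isCont_cong[OF c2] c1])
qed

lemma gg_cont: "continuous_on {0..pi/2} gg"
proof -
  have "((\<lambda>x::real. ln (sin x / x)) \<longlongrightarrow> 0) (at_right 0)" by real_asymp
  moreover have "\<forall>\<^sub>F x in at_right 0. (\<lambda>x. ln (sin x / x)) x = gg x"
    using eventually_at_right_less[of "0::real"] by (auto simp: gg_def elim!: eventually_mono)
  ultimately have l0: "(gg \<longlongrightarrow> 0) (at_right 0)"
    by (rule_tac iffD1[OF tendsto_cong]) auto
  have l: "(gg \<longlongrightarrow> gg 0) (at_right 0)" using l0 by (simp add: gg_def)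
  show ?thesis
    unfolding continuous_on_eq_continuous_within
  proof
    fix x assume x: "x \<in> {0..pi/2}"
    show "continuous (at x within {0..pi/2}) gg"
    proof (cases "x = 0")
      case True
      then show ?thesis using l by (simp add: continuous_within at_within_Icc_at_right)
    next
      case False
      then have "isCont gg x" using x pi_gt3 by (intro gg_isCont) auto
      then show ?thesis by (rule continuous_at_imp_continuous_at_within)
    qed
  qed
qed

lemma gd_cont: "continuous_on {0..pi/2} gd"
proof -
  have "((\<lambda>x::real. cos x / sin x - 1/x) \<longlongrightarrow> 0) (at_right 0)" by real_asymp
  moreover have "\<forall>\<^sub>F x in at_right 0. (\<lambda>x. cos x / sin x - 1/x) x = gd x"
    using eventually_at_right_less[of "0::real"] by (auto simp: gd_def elim!: eventually_mono)
  ultimately have l0: "(gd \<longlongrightarrow> 0) (at_right 0)"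
    by (rule_tac iffD1[OF tendsto_cong]) auto
  have l: "(gd \<longlongrightarrow> gd 0) (at_right 0)" using l0 by (simp add: gd_def)
  show ?thesis
    unfolding continuous_on_eq_continuous_within
  proof
    fix x assume x: "x \<in> {0..pi/2}"
    show "continuous (at x within {0..pi/2}) gd"
    proof (cases "x = 0")
      case True
      then show ?thesis using l by (simp add: continuous_within at_within_Icc_at_right)
    next
      case False
      then have "isCont gd x" using x pi_gt3 by (intro gd_isCont) auto
      then show ?thesis by (rule continuous_at_imp_continuous_at_within)
    qed
  qed
qed

lemma gg_mvt:
  assumes "0 \<le> x" "x \<le> y" "y \<le> pi/2"
  shows "\<exists>z. x \<le> z \<and> z \<le> y \<and> gg y - gg x = (y - x) * gd z"
proof (cases "x = y")
  case True then show ?thesis by auto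
next
  case False
  then have xy: "x < y" using assms by auto
  have "continuous_on {x..y} gg"
    using gg_cont by (rule continuous_on_subset) (use assms in auto)
  moreover have "gg differentiable (at t)" if "x < t" "t < y" for t
    using gg_deriv[of t] that assms pi_gt3 real_differentiable_def by force
  ultimately obtain l z where z: "x < z" "z < y" "DERIV gg z :> l" "gg y - gg x = (y - x) * l"
    using MVT[OF xy] by blast
  have "DERIV gg z :> gd z" using z assms pi_gt3 by (intro gg_deriv) auto
  then have "l = gd z" using z(3) DERIV_unique by blast
  then show ?thesis using z by (intro exI[of _ z]) auto
qed

lemma gd_unif: "uniformly_continuous_on {0..pi/2} gd"
  by (rule compact_uniformly_continuous[OF gd_cont]) auto

lemma gg_mvt2:
  assumes "0 \<le> L" "L \<le> x" "x \<le> U" "L \<le> y" "y \<le> U" "U \<le> pi/2"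
  shows "\<exists>z. L \<le> z \<and> z \<le> U \<and> gg x - gg y = (x - y) * gd z"
proof (cases "y \<le> x")
  case True
  then obtain z where "y \<le> z" "z \<le> x" "gg x - gg y = (x - y) * gd z"
    using gg_mvt[of y x] assms by auto
  then show ?thesis using assms by (intro exI[of _ z]) auto
next
  case False
  then obtain z where "x \<le> z" "z \<le> y" "gg y - gg x = (y - x) * gd z"
    using gg_mvt[of x y] assms by auto
  then have "gg x - gg y = (x - y) * gd z" by (simp add: algebra_simps)
  then show ?thesis using assms \<open>x \<le> z\<close> \<open>z \<le> y\<close> by (intro exI[of _ z]) auto
qed

lemma sum_limit:
  fixes h :: "nat \<Rightarrow> real" and c d :: real
  assumes c: "0 \<le> c" "c \<le> 1" and d: "0 \<le> d" "d \<le> 1"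
  and hpos: "\<And>m. h m > 0" and hb: "\<And>m. 2 * h m * real m \<le> pi/2"
  and h0: "h \<longlonglongrightarrow> 0" and hl: "(\<lambda>m. 2 * h m * real m) \<longlonglongrightarrow> pi/2"
  shows "(\<lambda>m. \<Sum>k<m. gg (h m * (2*real k + 1 + c)) - gg (h m * (2*real k + 1 + d)))
           \<longlonglongrightarrow> (c - d)/2 * gg (pi/2)"
proof -
  define e where "e m k = (gg (h m * (2*real k + 1 + c)) - gg (h m * (2*real k + 1 + d)))
     - (c - d)/2 * (gg (2 * h m * real (Suc k)) - gg (2 * h m * real k))" for m k
  define E where "E m = (\<Sum>k<m. e m k)" for m
  have tel: "(\<Sum>k<m. gg (2 * h m * real (Suc k)) - gg (2 * h m * real k)) = gg (2 * h m * real m)" for m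
    using sum_lessThan_telescope[of "\<lambda>k. gg (2 * h m * real k)" m] by (simp add: gg_def)
  have split: "(\<Sum>k<m. gg (h m * (2*real k + 1 + c)) - gg (h m * (2*real k + 1 + d)))
      = E m + (c - d)/2 * gg (2 * h m * real m)" for m
  proof -
    have "E m = (\<Sum>k<m. gg (h m * (2*real k + 1 + c)) - gg (h m * (2*real k + 1 + d)))
       - (\<Sum>k<m. (c - d)/2 * (gg (2 * h m * real (Suc k)) - gg (2 * h m * real k)))"
      unfolding E_def e_def by (rule sum_subtractf)
    also have "(\<Sum>k<m. (c - d)/2 * (gg (2 * h m * real (Suc k)) - gg (2 * h m * real k)))
       = (c - d)/2 * gg (2 * h m * real m)"
      by (subst sum_distrib_left[symmetric]) (rule arg_cong[OF tel])
    finally show ?thesis by simp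
  qed
  have E0: "E \<longlonglongrightarrow> 0"
  proof (rule LIMSEQ_I)
    fix r :: real assume r: "0 < r"
    obtain \<delta> where \<delta>: "\<delta> > 0" and uc: "\<And>x y. x \<in> {0..pi/2} \<Longrightarrow> y \<in> {0..pi/2} \<Longrightarrow>
        dist y x < \<delta> \<Longrightarrow> dist (gd y) (gd x) < r"
      using gd_unif r unfolding uniformly_continuous_on_def by metis
    obtain M where M: "\<And>m. m \<ge> M \<Longrightarrow> norm (h m - 0) < \<delta>/2"
      using LIMSEQ_D[OF h0, of "\<delta>/2"] \<delta> by auto
    have "norm (E m - 0) < r" if m: "m \<ge> M" for m
    proof -
      have hd: "2 * h m < \<delta>" using M[OF m] hpos[of m] by simp
      have ek: "\<bar>e m k\<bar> \<le> h m * r" if k: "k < m" for k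
      proof -
        define L where "L = 2 * h m * real k"
        define U where "U = 2 * h m * real (Suc k)"
        have hp: "h m > 0" by (rule hpos)
        have "U \<le> 2 * h m * real m" unfolding U_def using k hp by (intro mult_left_mono) auto
        then have U2: "U \<le> pi/2" using hb[of m] by linarith
        have L0: "0 \<le> L" using hp by (simp add: L_def)
        have LU: "U - L = 2 * h m" by (simp add: L_def U_def algebra_simps)
        have a1: "L \<le> h m * (2*real k + 1 + c)" "h m * (2*real k + 1 + c) \<le> U"
          using hp c by (simp_all add: L_def U_def algebra_simps)
        have a2: "L \<le> h m * (2*real k + 1 + d)" "h m * (2*real k + 1 + d) \<le> U"
          using hp d by (simp_all add: L_def U_def algebra_simps)
        obtain z1 where z1: "L \<le> z1" "z1 \<le> U"
          "gg (h m * (2*real k + 1 + c)) - gg (h m * (2*real k + 1 + d)) =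
           (h m * (2*real k + 1 + c) - h m * (2*real k + 1 + d)) * gd z1"
          using gg_mvt2[OF L0 a1 a2 U2] by blast
        obtain z2 where z2: "L \<le> z2" "z2 \<le> U" "gg U - gg L = (U - L) * gd z2"
        proof -
          have "L \<le> U" using a1 by linarith
          then show ?thesis using gg_mvt2[of L U U L] L0 U2 that by auto
        qed
        have "e m k = h m * (c - d) * (gd z1 - gd z2)"
        proof -
          have "e m k = (gg (h m * (2*real k + 1 + c)) - gg (h m * (2*real k + 1 + d)))
               - (c - d)/2 * (gg U - gg L)" by (simp add: e_def L_def U_def)
          also have "\<dots> = (h m * (2*real k + 1 + c) - h m * (2*real k + 1 + d)) * gd z1
               - (c - d)/2 * ((U - L) * gd z2)" by (simp only: z1(3) z2(3))
          also have "\<dots> = h m * (c - d) * (gd z1 - gd z2)" unfolding LU by (simp add: algebra_simps add_divide_distrib diff_divide_distrib)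
          finally show ?thesis .
        qed
        moreover have "\<bar>gd z1 - gd z2\<bar> < r"
        proof -
          have "dist z1 z2 < \<delta>" using z1 z2 LU hd by (simp add: dist_real_def abs_if)
          then show ?thesis using uc[of z2 z1] z1 z2 L0 U2 by (simp add: dist_real_def)
        qed
        moreover have "\<bar>c - d\<bar> \<le> 1" using c d by linarith
        ultimately have "\<bar>e m k\<bar> = h m * \<bar>c - d\<bar> * \<bar>gd z1 - gd z2\<bar>"
          using hp by (simp add: abs_mult)
        also have "\<dots> \<le> h m * 1 * r"
          using hp \<open>\<bar>c - d\<bar> \<le> 1\<close> \<open>\<bar>gd z1 - gd z2\<bar> < r\<close>
          by (intro mult_mono mult_left_mono) auto
        finally show ?thesis by simp
      qed
      have "\<bar>E m\<bar> \<le> (\<Sum>k<m. \<bar>e m k\<bar>)" unfolding E_def by (rule sum_abs)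
      also have "\<dots> \<le> (\<Sum>k<m. h m * r)" by (rule sum_mono) (use ek in auto)
      also have "\<dots> = (2 * h m * real m) * r / 2" by simp
      also have "\<dots> \<le> (pi/2) * r / 2" using hb[of m] r by (intro divide_right_mono mult_right_mono) auto
      also have "\<dots> < r" using r pi_less_4 by (simp add: field_simps)
      finally show ?thesis by simp
    qed
    then show "\<exists>no. \<forall>m\<ge>no. norm (E m - 0) < r" by blast
  qed
  have "(\<lambda>m. gg (2 * h m * real m)) \<longlonglongrightarrow> gg (pi/2)"
    using isCont_tendsto_compose[OF gg_isCont hl] pi_gt_zero by simp
  then have "(\<lambda>m. E m + (c - d)/2 * gg (2 * h m * real m)) \<longlonglongrightarrow> 0 + (c - d)/2 * gg (pi/2)"
    by (intro tendsto_intros E0)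
  then show ?thesis unfolding split by simp
qed

lemma aux_cancel: "A \<noteq> 0 \<Longrightarrow> B \<noteq> 0 \<Longrightarrow> Q \<noteq> 0 \<Longrightarrow>
  X * (A * Pp) / (B * Q) * (B / A) = Pp / Q * (X::real)"
  by (simp add: field_simps)

lemma poch_ratio:
  fixes z w :: real
  assumes z: "z > 0" and w: "w > 0"
  shows "(\<lambda>m. pochhammer z m / pochhammer w m * real m powr (w - z)) \<longlonglongrightarrow> Gamma w / Gamma z"
proof -
  have gz: "Gamma z > 0" "Gamma w > 0" using z w by auto
  have "(\<lambda>m. Gamma_series w m / Gamma_series z m * ((w + real m) / (z + real m)))
      \<longlonglongrightarrow> Gamma w / Gamma z * 1"
  proof (intro tendsto_intros)
    show "Gamma z \<noteq> 0" using gz by simp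
    show "(\<lambda>m. (w + real m) / (z + real m)) \<longlonglongrightarrow> 1" by real_asymp
  qed
  moreover have "\<forall>\<^sub>F m in sequentially. Gamma_series w m / Gamma_series z m * ((w + real m) / (z + real m))
      = pochhammer z m / pochhammer w m * real m powr (w - z)"
  proof (rule eventually_sequentiallyI[of 1])
    fix m :: nat assume m: "m \<ge> 1"
    have pz: "pochhammer z m > 0" "pochhammer w m > 0" using z w by (auto intro: pochhammer_pos)
    have fz: "fact m > (0::real)" by simp
    have "Gamma_series w m / Gamma_series z m
        = exp ((w - z) * ln (real m)) * pochhammer z (Suc m) / pochhammer w (Suc m)"
    proof -
      have "pochhammer z (Suc m) > 0" "pochhammer w (Suc m) > 0" using z w by (auto intro: pochhammer_pos)
      then show ?thesis using fz unfolding Gamma_series_def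
        by (simp add: field_simps exp_diff left_diff_distrib)
    qed
    also have "exp ((w - z) * ln (real m)) = real m powr (w - z)"
      using m by (simp add: powr_def mult.commute)
    finally have GS: "Gamma_series w m / Gamma_series z m = real m powr (w - z) * pochhammer z (Suc m) / pochhammer w (Suc m)" .
    then show "Gamma_series w m / Gamma_series z m * ((w + real m) / (z + real m))
      = pochhammer z m / pochhammer w m * real m powr (w - z)"
    proof -
      have zm: "z + real m \<noteq> 0" "w + real m \<noteq> 0" using z w by auto
      show ?thesis unfolding GS pochhammer_rec'
        using pz zm by (intro aux_cancel) auto
    qed
  qed
  ultimately show ?thesis by (simp add: tendsto_cong)
qed

lemma aux2: fixes h u v A B :: real assumes "h>0" "u>0" "v>0" "A>0" "B>0"
  shows "(h * (2 * u)) * A / ((h * (2 * v)) * B) = (u / v) * (A / B)" using assms by (simp add: field_simps)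

lemma sin_gg: assumes "0 < x" "x \<le> pi/2" shows "sin x = x * exp (gg x)"
proof -
  have "sin x > 0" using assms pi_gt3 by (intro sin_gt_zero) auto
  then have "exp (gg x) = sin x / x" using assms by (simp add: gg_def)
  then show ?thesis using assms by simp
qed

lemma prod_identity:
  fixes h c d :: real
  assumes h: "h > 0" and c: "0 \<le> c" "c \<le> 1" and d: "0 \<le> d" "d \<le> 1"
    and hb: "2 * h * real m \<le> pi/2"
  shows "(\<Prod>k<m. sin (h * (2*real k + 1 + c)) / sin (h * (2*real k + 1 + d)))
     = pochhammer ((1+c)/2) m / pochhammer ((1+d)/2) m *
       exp (\<Sum>k<m. gg (h * (2*real k + 1 + c)) - gg (h * (2*real k + 1 + d)))"
proof -
  have each: "sin (h * (2*real k + 1 + c)) / sin (h * (2*real k + 1 + d))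
     = (((1+c)/2 + real k) / ((1+d)/2 + real k)) *
       exp (gg (h * (2*real k + 1 + c)) - gg (h * (2*real k + 1 + d)))" if k: "k \<in> {..<m}" for k
  proof -
    have kb: "2*real k + 2 \<le> 2 * real m" using k by auto
    have b1: "h * (2*real k + 1 + c) \<le> pi/2"
    proof -
      have "h * (2*real k + 1 + c) \<le> h * (2 * real m)" using h c kb by (intro mult_left_mono) auto
      then show ?thesis using hb by (simp add: algebra_simps)
    qed
    have b2: "h * (2*real k + 1 + d) \<le> pi/2"
    proof -
      have "h * (2*real k + 1 + d) \<le> h * (2 * real m)" using h d kb by (intro mult_left_mono) auto
      then show ?thesis using hb by (simp add: algebra_simps)
    qed
    have p1: "h * (2*real k + 1 + c) > 0" "h * (2*real k + 1 + d) > 0" using h c d by auto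
    have e1: "2 * ((1+c)/2 + real k) = 2*real k + 1 + c" "2 * ((1+d)/2 + real k) = 2*real k + 1 + d"
      by (simp_all add: algebra_simps)
    have "((1+c)/2 + real k) > 0" "((1+d)/2 + real k) > 0" using c d by (simp_all add: add_pos_nonneg)
    from aux2[OF h this exp_gt_zero exp_gt_zero, of "gg (h * (2*real k + 1 + c))" "gg (h * (2*real k + 1 + d))"]
    show ?thesis
      unfolding sin_gg[OF p1(1) b1] sin_gg[OF p1(2) b2] exp_diff e1 .
  qed
  have "(\<Prod>k<m. sin (h * (2*real k + 1 + c)) / sin (h * (2*real k + 1 + d)))
     = (\<Prod>k<m. (((1+c)/2 + real k) / ((1+d)/2 + real k)) *
       exp (gg (h * (2*real k + 1 + c)) - gg (h * (2*real k + 1 + d))))"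
    by (rule prod.cong[OF refl each])
  also have "\<dots> = (\<Prod>k<m. ((1+c)/2 + real k)) / (\<Prod>k<m. ((1+d)/2 + real k)) *
       exp (\<Sum>k<m. gg (h * (2*real k + 1 + c)) - gg (h * (2*real k + 1 + d)))"
    by (simp add: prod.distrib prod_dividef exp_sum)
  also have "\<dots> = pochhammer ((1+c)/2) m / pochhammer ((1+d)/2) m *
       exp (\<Sum>k<m. gg (h * (2*real k + 1 + c)) - gg (h * (2*real k + 1 + d)))"
    by (simp add: pochhammer_prod atLeast0LessThan)
  finally show ?thesis .
qed

lemma cot_term:
  fixes T N m j :: nat and c :: real
  assumes T: "T > 0" and N: "real N = 2 * real m + 1 + c" and c: "0 \<le> c"
    and j: "1 \<le> j" "j \<le> m"
  defines "h \<equiv> pi * real T / (2 * (2 + (real N - 1) * real T))"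
  shows "(cot (psi N T j / 2))^2 = (sin (h * (2 * real (m - j) + 1 + c)))^2
            / (sin (h * (2 * real (j - 1) + 1 + 2 / real T)))^2"
proof -
  define D where "D = 2 + (real N - 1) * real T"
  have Dp: "D > 0" using N c T by (simp add: D_def add_pos_nonneg)
  have Tp: "real T > 0" using T by simp
  have hD: "h = pi * real T / (2 * D)" by (simp add: h_def D_def)
  have psiD: "psi N T j = pi * (2 + real T * (2 * real j - 1)) / D" by (simp add: psi_def D_def)
  have j1: "real (j - 1) = real j - 1" "real (m - j) = real m - real j" using j by (simp_all add: of_nat_diff)
  have t1: "psi N T j / 2 = h * (2 * real (j - 1) + 1 + 2 / real T)"
    unfolding psiD hD j1 using Dp Tp by (simp add: field_simps)
  have ND: "real N = (D - 2) / real T + 1" using Tp by (simp add: D_def)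
  have t2: "pi/2 - psi N T j / 2 = h * (2 * real (m - j) + 1 + c)"
  proof -
    have c': "c = real N - 2 * real m - 1" using N by simp
    show ?thesis unfolding psiD hD j1 c' ND using Dp Tp by (simp add: field_simps)
  qed
  have "cot (psi N T j / 2) = sin (pi/2 - psi N T j / 2) / sin (psi N T j / 2)"
    by (simp add: cot_def cos_sin_eq)
  then have "cot (psi N T j / 2) = sin (h * (2 * real (m - j) + 1 + c)) / sin (psi N T j / 2)"
    by (simp only: t2)
  then show ?thesis by (simp only: t1 power_divide)
qed

lemma cot_prod:
  fixes T N m :: nat and c :: real
  assumes T: "T > 0" and N: "real N = 2 * real m + 1 + c" and c: "0 \<le> c"
  defines "h \<equiv> pi * real T / (2 * (2 + (real N - 1) * real T))"
  shows "(\<Prod>j=1..m. (cot (psi N T j / 2))^2) =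
     (\<Prod>k<m. sin (h * (2 * real k + 1 + c)) / sin (h * (2 * real k + 1 + 2 / real T)))^2"
proof -
  define F where "F k = (sin (h * (2 * real k + 1 + c)))^2" for k
  define G where "G k = (sin (h * (2 * real k + 1 + 2 / real T)))^2" for k
  have "(\<Prod>j=1..m. (cot (psi N T j / 2))^2) = (\<Prod>j=1..m. F (m - j) / G (j - 1))"
    using cot_term[OF T N c] unfolding F_def G_def h_def by (intro prod.cong) auto
  also have "\<dots> = (\<Prod>i<m. F (m - Suc i) / G i)"
    by (subst prod.atLeast1_atMost_eq[unfolded One_nat_def[symmetric]]) simp
  also have "\<dots> = (\<Prod>i<m. F (m - Suc i)) / (\<Prod>i<m. G i)" by (rule prod_dividef)
  also have "(\<Prod>i<m. F (m - Suc i)) = (\<Prod>i<m. F i)" by (rule prod.nat_diff_reindex)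
  also have "(\<Prod>i<m. F i) / (\<Prod>i<m. G i) = (\<Prod>i<m. F i / G i)" by (rule prod_dividef[symmetric])
  also have "\<dots> = (\<Prod>k<m. sin (h * (2 * real k + 1 + c)) / sin (h * (2 * real k + 1 + 2 / real T)))^2"
    unfolding F_def G_def by (simp add: power_divide prod_power_distrib)
  finally show ?thesis .
qed

lemma Q_limit:
  fixes h :: "nat \<Rightarrow> real" and c d :: real
  assumes c: "0 \<le> c" "c \<le> 1" and d: "0 \<le> d" "d \<le> 1"
  and hpos: "\<And>m. h m > 0" and hb: "\<And>m. 2 * h m * real m \<le> pi/2"
  and h0: "h \<longlonglongrightarrow> 0" and hl: "(\<lambda>m. 2 * h m * real m) \<longlonglongrightarrow> pi/2"
  shows "(\<lambda>m. (\<Prod>k<m. sin (h m * (2*real k + 1 + c)) / sin (h m * (2*real k + 1 + d))) * real m powr ((d - c)/2))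
     \<longlonglongrightarrow> Gamma ((1+d)/2) / Gamma ((1+c)/2) * exp ((c - d)/2 * gg (pi/2))"
proof -
  have eq: "(\<Prod>k<m. sin (h m * (2*real k + 1 + c)) / sin (h m * (2*real k + 1 + d))) * real m powr ((d - c)/2)
     = (pochhammer ((1+c)/2) m / pochhammer ((1+d)/2) m * real m powr ((1+d)/2 - (1+c)/2)) *
       exp (\<Sum>k<m. gg (h m * (2*real k + 1 + c)) - gg (h m * (2*real k + 1 + d)))" for m
  proof -
    have "(1+d)/2 - (1+c)/2 = (d - c)/2" by (simp add: field_simps)
    then show ?thesis unfolding prod_identity[OF hpos c d hb] by (simp only: mult_ac)
  qed
  have "(\<lambda>m. (pochhammer ((1+c)/2) m / pochhammer ((1+d)/2) m * real m powr ((1+d)/2 - (1+c)/2)) *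
       exp (\<Sum>k<m. gg (h m * (2*real k + 1 + c)) - gg (h m * (2*real k + 1 + d))))
     \<longlonglongrightarrow> Gamma ((1+d)/2) / Gamma ((1+c)/2) * exp ((c - d)/2 * gg (pi/2))"
    using c d by (intro tendsto_mult poch_ratio tendsto_exp sum_limit[OF c d hpos hb h0 hl]) auto
  then show ?thesis unfolding eq .
qed

lemma seq_parity:
  fixes X :: "nat \<Rightarrow> real"
  assumes o: "(\<lambda>m. X (2*m+1)) \<longlonglongrightarrow> L" and e: "(\<lambda>m. X (2*m+2)) \<longlonglongrightarrow> L"
  shows "X \<longlonglongrightarrow> L"
proof (rule LIMSEQ_I)
  fix r :: real assume r: "r > 0"
  obtain M1 where M1: "\<And>m. m \<ge> M1 \<Longrightarrow> norm (X (2*m+1) - L) < r" using LIMSEQ_D[OF o r] by blast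
  obtain M2 where M2: "\<And>m. m \<ge> M2 \<Longrightarrow> norm (X (2*m+2) - L) < r" using LIMSEQ_D[OF e r] by blast
  have "norm (X n - L) < r" if n: "n \<ge> 2*(M1+M2)+2" for n
  proof (cases "even n")
    case True
    then have m: "n = 2*((n - 2) div 2)+2" using n by presburger
    have q: "(n - 2) div 2 \<ge> M2" using n by presburger
    have "norm (X (2*((n - 2) div 2)+2) - L) < r" by (rule M2[OF q])
    then show ?thesis by (subst m)
  next
    case False
    then obtain m where m: "n = 2*m+1" by (metis oddE)
    then show ?thesis using M1[of m] n by auto
  qed
  then show "\<exists>no. \<forall>n\<ge>no. norm (X n - L) < r" by blast
qed

lemma gg_half_pi: "gg (pi/2) = ln 2 - ln pi"
  by (simp add: gg_def ln_div)

lemma val_odd: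
  fixes G a :: real
  shows "(G / sqrt pi * exp ((0 - a)/2 * (ln 2 - ln pi)))^2 * 2 powr a = pi powr (a - 1) * G^2"
proof -
  have e: "(exp ((0 - a)/2 * (ln 2 - ln pi)))^2 = exp (- a * ln 2 + a * ln pi)"
    by (simp add: power2_eq_square exp_add[symmetric] algebra_simps)
  have s: "(sqrt pi)^2 = pi" by simp
  have p1: "2 powr a = exp (a * ln 2)" by (simp add: powr_def)
  have p2: "pi powr (a - 1) = exp (a * ln pi) / pi" by (simp add: powr_def exp_diff left_diff_distrib)
  have "(G / sqrt pi * exp ((0 - a)/2 * (ln 2 - ln pi)))^2 * 2 powr a
     = G^2 / pi * (exp (- a * ln 2 + a * ln pi) * exp (a * ln 2))"
    unfolding power_mult_distrib power_divide e s p1 by simp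
  also have "exp (- a * ln 2 + a * ln pi) * exp (a * ln 2) = exp (a * ln pi)"
    by (simp add: exp_add[symmetric])
  finally show ?thesis unfolding p2 by simp
qed

lemma val_even:
  fixes G a :: real
  shows "1/2 * (G / 1 * exp ((1 - a)/2 * (ln 2 - ln pi)))^2 * 2 powr a = pi powr (a - 1) * G^2"
proof -
  have e: "(exp ((1 - a)/2 * (ln 2 - ln pi)))^2 = exp ((1 - a) * (ln 2 - ln pi))"
    by (simp add: power2_eq_square exp_add[symmetric] algebra_simps)
  have p1: "2 powr a = exp (a * ln 2)" by (simp add: powr_def)
  have p2: "pi powr (a - 1) = exp ((a - 1) * ln pi)" by (simp add: powr_def)
  have "exp ((1 - a) * (ln 2 - ln pi)) * exp (a * ln 2) = 2 * exp ((a - 1) * ln pi)"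
  proof -
    have "exp ((1 - a) * (ln 2 - ln pi)) * exp (a * ln 2) = exp (ln 2 + (a - 1) * ln pi)"
      by (simp add: exp_add[symmetric] algebra_simps)
    also have "\<dots> = 2 * exp ((a - 1) * ln pi)" by (simp add: exp_add)
    finally show ?thesis .
  qed
  then show ?thesis unfolding power_mult_distrib e p1 p2 by (simp add: algebra_simps)
qed

lemma aux3: "(x::real) > 0 \<Longrightarrow> M > 0 \<Longrightarrow> D > 0 \<Longrightarrow>
  x / D * (Q^2 * (M / x)) * (R / M) = Q^2 / D * R"
  by (simp add: field_simps)

theorem theorem1:
  fixes T :: nat
  assumes "T \<ge> 3"
  shows "(\<lambda>N. P T N * real N powr (2 / real T)) \<longlonglongrightarrow>
           pi powr ((2 - real T) / real T) * (Gamma ((real T + 2) / (2 * real T)))^2"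
proof -
  define a where "a = 2 / real T"
  have T0: "T > 0" using assms by simp
  have Tp: "real T > 0" using assms by simp
  have a0: "0 < a" "0 \<le> a" "a \<le> 1" using assms by (auto simp: a_def field_simps)
  have tg: "(real T + 2) / (2 * real T) = (1 + a)/2" "(2 - real T) / real T = a - 1"
    using Tp by (simp_all add: a_def field_simps)
  define X where "X N = P T N * real N powr (2 / real T)" for N
  define L where "L = pi powr (a - 1) * (Gamma ((1 + a)/2))^2"
  define ho where "ho m = pi * real T / (2 * (2 + (real (2*m+1) - 1) * real T))" for m
  have ho_eq: "ho m = pi / (2 * (2 * real m + a))" for m
    using Tp unfolding ho_def a_def by (simp add: field_simps)
  have ho1: "ho m > 0" for m unfolding ho_eq using a0 by simp
  have ho2: "2 * ho m * real m \<le> pi/2" for m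
    unfolding ho_eq using a0 by (simp add: field_simps)
  have ho3: "ho \<longlonglongrightarrow> 0" unfolding ho_eq[abs_def] using a0 by real_asymp
  have ho4: "(\<lambda>m. 2 * ho m * real m) \<longlonglongrightarrow> pi/2" unfolding ho_eq[abs_def] using a0 by real_asymp
  define Qo where "Qo m = (\<Prod>k<m. sin (ho m * (2*real k + 1 + 0)) / sin (ho m * (2*real k + 1 + a)))" for m
  have Po: "P T (2*m+1) = (Qo m)^2" for m
  proof -
    have "real (2*m+1) = 2 * real m + 1 + 0" by simp
    from cot_prod[OF T0 this] show ?thesis
      unfolding P_def Qo_def ho_def a_def by simp
  qed
  have Qol: "(\<lambda>m. Qo m * real m powr ((a - 0)/2)) \<longlonglongrightarrow>
     Gamma ((1+a)/2) / Gamma ((1+0)/2) * exp ((0 - a)/2 * gg (pi/2))"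
    unfolding Qo_def using a0 by (intro Q_limit ho1 ho2 ho3 ho4) auto
  have rlo: "(\<lambda>m. ((2 * real m + 1) / real m) powr a) \<longlonglongrightarrow> 2 powr a" using a0 by real_asymp
  have odd: "(\<lambda>m. X (2*m+1)) \<longlonglongrightarrow> L"
  proof -
    have "(\<lambda>m. (Qo m * real m powr ((a - 0)/2))^2 * ((2 * real m + 1) / real m) powr a) \<longlonglongrightarrow>
       (Gamma ((1+a)/2) / Gamma ((1+0)/2) * exp ((0 - a)/2 * gg (pi/2)))^2 * 2 powr a"
      by (intro tendsto_intros Qol rlo)
    also have "(Gamma ((1+a)/2) / Gamma ((1+0)/2) * exp ((0 - a)/2 * gg (pi/2)))^2 * 2 powr a = L"
      unfolding L_def gg_half_pi using val_odd[of "Gamma ((1+a)/2)" a] by (simp add: Gamma_one_half_real)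
    finally have lim: "(\<lambda>m. (Qo m * real m powr ((a - 0)/2))^2 * ((2 * real m + 1) / real m) powr a) \<longlonglongrightarrow> L" .
    have "\<forall>\<^sub>F m in sequentially. (Qo m * real m powr ((a - 0)/2))^2 * ((2 * real m + 1) / real m) powr a = X (2*m+1)"
    proof (rule eventually_sequentiallyI[of 1])
      fix m :: nat assume m: "m \<ge> 1"
      then have mp: "real m > 0" by simp
      have sq: "(real m powr (a/2))^2 = real m powr a"
        by (simp add: power2_eq_square powr_add[symmetric])
      have mpa: "real m powr a > 0" using mp by simp
      show "(Qo m * real m powr ((a - 0)/2))^2 * ((2 * real m + 1) / real m) powr a = X (2*m+1)"
        unfolding X_def Po a_def[symmetric] using mpa mp
        by (simp add: power_mult_distrib sq powr_divide field_simps)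
    qed
    from Lim_transform_eventually[OF lim this] show ?thesis .
  qed
  define he where "he m = pi * real T / (2 * (2 + (real (2*m+2) - 1) * real T))" for m
  have he_eq: "he m = pi / (2 * (2 * real m + 1 + a))" for m
    using Tp unfolding he_def a_def by (simp add: field_simps)
  have he1: "he m > 0" for m unfolding he_eq using a0 by simp
  have he2: "2 * he m * real m \<le> pi/2" for m
    unfolding he_eq using a0 by (simp add: field_simps)
  have he3: "he \<longlonglongrightarrow> 0" unfolding he_eq[abs_def] using a0 by real_asymp
  have he4: "(\<lambda>m. 2 * he m * real m) \<longlonglongrightarrow> pi/2" unfolding he_eq[abs_def] using a0 by real_asymp
  define Qe where "Qe m = (\<Prod>k<m. sin (he m * (2*real k + 1 + 1)) / sin (he m * (2*real k + 1 + a)))" for m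
  have Pe: "P T (2*m+2) = (Qe m)^2 / (2 * real m + 1 + a)" for m
  proof -
    have "real (2*m+2) = 2 * real m + 1 + 1" by simp
    from cot_prod[OF T0 this] have "(\<Prod>j=1..m. (cot (psi (2*m+2) T j / 2))^2) = (Qe m)^2"
      unfolding Qe_def he_def a_def by simp
    moreover have "real T / (2 + (real (2*m+2) - 1) * real T) = 1 / (2 * real m + 1 + a)"
      using Tp unfolding a_def by (simp add: field_simps)
    ultimately show ?thesis unfolding P_def by simp
  qed
  have Qel: "(\<lambda>m. Qe m * real m powr ((a - 1)/2)) \<longlonglongrightarrow>
     Gamma ((1+a)/2) / Gamma ((1+1)/2) * exp ((1 - a)/2 * gg (pi/2))"
    unfolding Qe_def using a0 by (intro Q_limit he1 he2 he3 he4) auto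
  have rle: "(\<lambda>m. ((2 * real m + 2) / real m) powr a) \<longlonglongrightarrow> 2 powr a" using a0 by real_asymp
  have rle2: "(\<lambda>m. real m / (2 * real m + 1 + a)) \<longlonglongrightarrow> 1/2" using a0 by real_asymp
  have even: "(\<lambda>m. X (2*m+2)) \<longlonglongrightarrow> L"
  proof -
    have "(\<lambda>m. real m / (2 * real m + 1 + a) * (Qe m * real m powr ((a - 1)/2))^2 * ((2 * real m + 2) / real m) powr a) \<longlonglongrightarrow>
       1/2 * (Gamma ((1+a)/2) / Gamma ((1+1)/2) * exp ((1 - a)/2 * gg (pi/2)))^2 * 2 powr a"
      by (intro tendsto_intros Qel rle rle2)
    also have "1/2 * (Gamma ((1+a)/2) / Gamma ((1+1)/2) * exp ((1 - a)/2 * gg (pi/2)))^2 * 2 powr a = L"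
      unfolding L_def gg_half_pi using val_even[of "Gamma ((1+a)/2)" a] by simp
    finally have lim: "(\<lambda>m. real m / (2 * real m + 1 + a) * (Qe m * real m powr ((a - 1)/2))^2 * ((2 * real m + 2) / real m) powr a) \<longlonglongrightarrow> L" .
    have "\<forall>\<^sub>F m in sequentially. real m / (2 * real m + 1 + a) * (Qe m * real m powr ((a - 1)/2))^2 * ((2 * real m + 2) / real m) powr a = X (2*m+2)"
    proof (rule eventually_sequentiallyI[of 1])
      fix m :: nat assume m: "m \<ge> 1"
      then have mp: "real m > 0" by simp
      have sq: "(real m powr ((a - 1)/2))^2 = real m powr a / real m"
        using mp by (simp add: power2_eq_square powr_add[symmetric] powr_diff)
      have mpa: "real m powr a > 0" using mp by simp
      have dp: "2 * real m + 1 + a > 0" using a0 by simp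
      show "real m / (2 * real m + 1 + a) * (Qe m * real m powr ((a - 1)/2))^2 * ((2 * real m + 2) / real m) powr a = X (2*m+2)"
      proof -
        have pd: "((2 * real m + 2) / real m) powr a = (2 * real m + 2) powr a / real m powr a"
          using mp by (simp add: powr_divide)
        have "real m / (2 * real m + 1 + a) * (Qe m * real m powr ((a - 1)/2))^2 * ((2 * real m + 2) / real m) powr a
          = real m / (2 * real m + 1 + a) * ((Qe m)^2 * (real m powr a / real m)) * ((2 * real m + 2) powr a / real m powr a)"
          unfolding power_mult_distrib sq pd ..
        also have "\<dots> = (Qe m)^2 / (2 * real m + 1 + a) * (2 * real m + 2) powr a"
          by (rule aux3[OF mp mpa dp])
        also have "\<dots> = X (2*m+2)" unfolding X_def Pe a_def[symmetric] by (simp add: add_ac)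
        finally show ?thesis .
      qed
    qed
    from Lim_transform_eventually[OF lim this] show ?thesis .
  qed
  have "X \<longlonglongrightarrow> L" by (rule seq_parity[OF odd even])
  then show ?thesis unfolding X_def[abs_def] L_def tg a_def .
qed

end
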